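(* In any execution of the algorithm described in the context on a camera object $S$ and an associated versioned CAS object $O$ (after $O$'s constructor has completed), once a VNode is in the version list of $O$, it remains in the version list forever.
   Context: Camera $S$ has an integer field timestamp, initially 0; takeSnapshot(): read $t:=S.\mathit{timestamp}$, perform CAS$(S.\mathit{timestamp},t,t+1)$, return $t$. A VNode has fields val and nextv (both immutable after creation) and ts (an integer or special value TBD, initially TBD). Versioned CAS object $O$ has a field $\mathit{VHead}$. Constructor with value $v$: $\mathit{VHead}:=$ new VNode(val $v$, nextv NULL); initTS($\mathit{VHead}$). initTS($n$): if $n.ts=$TBD, read $c:=S.\mathit{timestamp}$ and CAS$(n.ts,\mathrm{TBD},c)$. readSnapshot($ts$): $node:=\mathit{VHead}$; initTS($node$); while $node.ts>ts$, $node:=node.nextv$; return $node.val$. vRead(): $h:=\mathit{VHead}$; initTS($h$); return $h.val$. vCAS(oldV,newV): $h:=\mathit{VHead}$; initTS($h$); if $h.val\neq$ oldV return false; if newV $=$ oldV return true; $m:=$ new VNode(val newV, nextv $h$); if CAS$(\mathit{VHead},h,m)$ succeeds, initTS($m$) and return true; else delete $m$, call initTS on the current value of $\mathit{VHead}$, return false. The version list of $O$ is the list obtained by starting at the VNode pointed to by $\mathit{VHead}$ and following nextv pointers; its head is the VNode pointed to by $\mathit{VHead}$. *)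

theory Defs
  imports Main
begin

text \<open>VNodes are identified by addresses (nat).  Every line of the pseudocode that
  touches shared memory is one atomic step of one process.\<close>

type_synonym addr = nat

datatype 'v kont =
    KRS int            \<comment> \<open>readSnapshot(ts): continue with the while loop\<close>
  | KVR                \<comment> \<open>vRead: return h.val\<close>
  | KVC 'v 'v          \<comment> \<open>vCAS(oldV,newV): continue with the comparison\<close>
  | KVCfail            \<comment> \<open>vCAS failure path: return false\<close>
  | KDone              \<comment> \<open>vCAS success path: return true\<close>

datatype 'v lpc =
    Idle
  | TS_read | TS_cas int
  | IT_read addr "'v kont" | IT_readc addr "'v kont" | IT_cas addr int "'v kont"
  | RS_head int | RS_loop int addr | RS_next int addr | RS_ret addr
  | VR_head | VR_ret addr
  | VC_head 'v 'v | VC_check addr 'v 'v | VC_alloc addr 'v | VC_cas addr addr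
  | VC_del addr | VC_head2

record ('p, 'v) st =
  tstamp :: int
  used   :: "addr set"           \<comment> \<open>addresses ever allocated\<close>
  alloc  :: "addr set"           \<comment> \<open>addresses allocated and not deleted\<close>
  nval   :: "addr \<Rightarrow> 'v"
  nnext  :: "addr \<Rightarrow> addr option" \<comment> \<open>None = NULL\<close>
  nts    :: "addr \<Rightarrow> int option"  \<comment> \<open>None = TBD\<close>
  vhead  :: addr
  pcs    :: "'p \<Rightarrow> 'v lpc"

fun kont_next :: "addr \<Rightarrow> 'v kont \<Rightarrow> 'v lpc" where
  "kont_next n (KRS t) = RS_loop t n"
| "kont_next n KVR = VR_ret n"
| "kont_next n (KVC ov nv) = VC_check n ov nv"
| "kont_next n KVCfail = Idle"
| "kont_next n KDone = Idle"

definition setpc :: "'p \<Rightarrow> 'v lpc \<Rightarrow> ('p,'v) st \<Rightarrow> ('p,'v) st" where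
  "setpc p c s = s\<lparr>pcs := (pcs s)(p := c)\<rparr>"

inductive pstep :: "'p \<Rightarrow> ('p,'v) st \<Rightarrow> ('p,'v) st \<Rightarrow> bool" where
  inv_ts: "pcs s p = Idle \<Longrightarrow> pstep p s (setpc p TS_read s)"
| inv_rs: "pcs s p = Idle \<Longrightarrow> pstep p s (setpc p (RS_head t) s)"
| inv_vr: "pcs s p = Idle \<Longrightarrow> pstep p s (setpc p VR_head s)"
| inv_vc: "pcs s p = Idle \<Longrightarrow> pstep p s (setpc p (VC_head ov nv) s)"
| ts_read: "pcs s p = TS_read \<Longrightarrow> pstep p s (setpc p (TS_cas (tstamp s)) s)"
| ts_cas: "pcs s p = TS_cas t \<Longrightarrow>
     pstep p s (setpc p Idle (if tstamp s = t then s\<lparr>tstamp := t + 1\<rparr> else s))"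
| it_read: "pcs s p = IT_read n k \<Longrightarrow>
     pstep p s (setpc p (if nts s n = None then IT_readc n k else kont_next n k) s)"
| it_readc: "pcs s p = IT_readc n k \<Longrightarrow> pstep p s (setpc p (IT_cas n (tstamp s) k) s)"
| it_cas: "pcs s p = IT_cas n c k \<Longrightarrow>
     pstep p s (setpc p (kont_next n k)
        (if nts s n = None then s\<lparr>nts := (nts s)(n := Some c)\<rparr> else s))"
| rs_head: "pcs s p = RS_head t \<Longrightarrow> pstep p s (setpc p (IT_read (vhead s) (KRS t)) s)"
| rs_loop: "pcs s p = RS_loop t n \<Longrightarrow>
     pstep p s (setpc p (if (\<exists>u. nts s n = Some u \<and> u > t) then RS_next t n else RS_ret n) s)"
| rs_next: "pcs s p = RS_next t n \<Longrightarrow> nnext s n = Some m \<Longrightarrow> pstep p s (setpc p (RS_loop t m) s)"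
| rs_ret: "pcs s p = RS_ret n \<Longrightarrow> pstep p s (setpc p Idle s)"
| vr_head: "pcs s p = VR_head \<Longrightarrow> pstep p s (setpc p (IT_read (vhead s) KVR) s)"
| vr_ret: "pcs s p = VR_ret n \<Longrightarrow> pstep p s (setpc p Idle s)"
| vc_head: "pcs s p = VC_head ov nv \<Longrightarrow> pstep p s (setpc p (IT_read (vhead s) (KVC ov nv)) s)"
| vc_check: "pcs s p = VC_check h ov nv \<Longrightarrow>
     pstep p s (setpc p (if nval s h \<noteq> ov then Idle else if nv = ov then Idle else VC_alloc h nv) s)"
| vc_alloc: "pcs s p = VC_alloc h nv \<Longrightarrow> m \<notin> used s \<Longrightarrow>
     pstep p s (setpc p (VC_cas h m)
        (s\<lparr>used := insert m (used s), alloc := insert m (alloc s),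
           nval := (nval s)(m := nv), nnext := (nnext s)(m := Some h),
           nts := (nts s)(m := None)\<rparr>))"
| vc_cas: "pcs s p = VC_cas h m \<Longrightarrow>
     pstep p s (if vhead s = h then setpc p (IT_read m KDone) (s\<lparr>vhead := m\<rparr>)
                else setpc p (VC_del m) s)"
| vc_del: "pcs s p = VC_del m \<Longrightarrow> pstep p s (setpc p VC_head2 (s\<lparr>alloc := alloc s - {m}\<rparr>))"
| vc_head2: "pcs s p = VC_head2 \<Longrightarrow> pstep p s (setpc p (IT_read (vhead s) KVCfail) s)"

definition step :: "('p,'v) st \<Rightarrow> ('p,'v) st \<Rightarrow> bool" where
  "step s s' \<longleftrightarrow> (\<exists>p. pstep p s s')"

text \<open>States right after O's constructor has completed: VHead points to a
  single allocated node with nextv NULL whose ts has been initialised; no process is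
  inside an operation on O (processes may be in the middle of takeSnapshot).\<close>
definition init_state :: "('p,'v) st \<Rightarrow> bool" where
  "init_state s \<longleftrightarrow> finite (used s) \<and> alloc s \<subseteq> used s \<and> vhead s \<in> alloc s
     \<and> nnext s (vhead s) = None \<and> nts s (vhead s) \<noteq> None
     \<and> (\<forall>p. pcs s p = Idle \<or> pcs s p = TS_read \<or> (\<exists>t. pcs s p = TS_cas t))"

definition in_vlist :: "('p,'v) st \<Rightarrow> addr \<Rightarrow> bool" where
  "in_vlist s a \<longleftrightarrow> (\<lambda>x y. nnext s x = Some y)\<^sup>*\<^sup>* (vhead s) a"

end

theory Submission
  imports Defs
begin

fun pc_addrs :: "'v lpc \<Rightarrow> addr set" where
  "pc_addrs (IT_read n k) = {n}"
| "pc_addrs (IT_readc n k) = {n}"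
| "pc_addrs (IT_cas n c k) = {n}"
| "pc_addrs (RS_loop t n) = {n}"
| "pc_addrs (RS_next t n) = {n}"
| "pc_addrs (RS_ret n) = {n}"
| "pc_addrs (VR_ret n) = {n}"
| "pc_addrs (VC_check h a b) = {h}"
| "pc_addrs (VC_alloc h a) = {h}"
| "pc_addrs (VC_cas h m) = {h, m}"
| "pc_addrs (VC_del m) = {m}"
| "pc_addrs _ = {}"

definition RR :: "('p,'v) st \<Rightarrow> addr \<Rightarrow> addr \<Rightarrow> bool" where
  "RR s x y \<longleftrightarrow> nnext s x = Some y"

definition good :: "('p,'v) st \<Rightarrow> addr \<Rightarrow> bool" where
  "good s x \<longleftrightarrow> (\<forall>y. (RR s)\<^sup>*\<^sup>* x y \<longrightarrow> y \<in> used s)"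

definition inv :: "('p,'v) st \<Rightarrow> bool" where
  "inv s \<longleftrightarrow> good s (vhead s) \<and> (\<forall>p. \<forall>n\<in>pc_addrs (pcs s p). good s n)
     \<and> (\<forall>p h m. pcs s p = VC_cas h m \<longrightarrow> nnext s m = Some h)"

lemma good_used: "good s n \<Longrightarrow> n \<in> used s"
  unfolding good_def by blast

lemma good_next: "good s n \<Longrightarrow> nnext s n = Some m \<Longrightarrow> good s m"
  unfolding good_def RR_def
  by (meson converse_rtranclp_into_rtranclp)

lemma good_same: "good s x \<Longrightarrow> nnext s' = nnext s \<Longrightarrow> used s \<subseteq> used s' \<Longrightarrow> good s' x"
  unfolding good_def RR_def by auto

lemma kont_addrs: "pc_addrs (kont_next n k) \<subseteq> {n}"
  by (cases k) auto

lemma kont_not_cas: "kont_next n k \<noteq> VC_cas h m"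
  by (cases k) auto

lemma reach_transfer:
  assumes "good s x" "\<forall>y\<in>used s. nnext s' y = nnext s y"
  shows "(RR s')\<^sup>*\<^sup>* x y \<longleftrightarrow> (RR s)\<^sup>*\<^sup>* x y"
proof
  assume "(RR s')\<^sup>*\<^sup>* x y"
  then show "(RR s)\<^sup>*\<^sup>* x y"
  proof (induction rule: rtranclp_induct)
    case base then show ?case by simp
  next
    case (step y z)
    then have "y \<in> used s" using assms(1) unfolding good_def by blast
    then have "RR s y z" using step assms(2) unfolding RR_def by auto
    then show ?case using step by (meson rtranclp.rtrancl_into_rtrancl)
  qed
next
  assume "(RR s)\<^sup>*\<^sup>* x y"
  then show "(RR s')\<^sup>*\<^sup>* x y"
  proof (induction rule: rtranclp_induct)
    case base then show ?case by simp
  next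
    case (step y z)
    then have "y \<in> used s" using assms(1) unfolding good_def by blast
    then have "RR s' y z" using step assms(2) unfolding RR_def by auto
    then show ?case using step by (meson rtranclp.rtrancl_into_rtrancl)
  qed
qed

lemma good_transfer:
  assumes "good s x" "\<forall>y\<in>used s. nnext s' y = nnext s y" "used s \<subseteq> used s'"
  shows "good s' x"
  using reach_transfer[OF assms(1,2)] assms(1,3) unfolding good_def by blast

lemma inv_generic:
  assumes "inv s" "nnext s' = nnext s" "used s' = used s" "vhead s' = vhead s"
    "pcs s' = (pcs s)(p := c)" "\<forall>n\<in>pc_addrs c. good s n"
    "\<forall>h m. c = VC_cas h m \<longrightarrow> nnext s m = Some h"
  shows "inv s'"
proof -
  have g: "good s x \<Longrightarrow> good s' x" for x using good_same assms(2,3) by blast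
  show ?thesis using assms(1,4-7) g unfolding inv_def by (auto simp: assms(2))
qed

lemma inv_pc: "inv s \<Longrightarrow> n \<in> pc_addrs (pcs s p) \<Longrightarrow> good s n"
  unfolding inv_def by blast

lemma inv_setpc:
  assumes "inv s" "\<forall>n\<in>pc_addrs c. good s n"
    "\<forall>h m. c = VC_cas h m \<longrightarrow> nnext s m = Some h"
  shows "inv (setpc p c s)"
  by (rule inv_generic[OF assms(1) _ _ _ _ assms(2,3)]) (auto simp: setpc_def)

lemma inv_upd:
  assumes "inv s" "nnext s' = nnext s" "used s' = used s" "vhead s' = vhead s" "pcs s' = pcs s"
  shows "inv s'"
  using inv_generic[OF assms(1-4), of p "pcs s p"] assms(1,5) unfolding inv_def by auto

lemma inv_pstep: "pstep p s s' \<Longrightarrow> inv s \<Longrightarrow> inv s'"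
proof (induction rule: pstep.induct)
  case (it_read s p n k)
  have g: "good s n" using it_read unfolding inv_def by (metis insertI1 pc_addrs.simps(1))
  show ?case
    by (intro inv_setpc[OF it_read.prems]) (use g kont_addrs[of n k] in \<open>auto simp: kont_not_cas\<close>)
next
  case (it_cas s p n c k)
  have g: "good s n" using it_cas unfolding inv_def by (metis insertI1 pc_addrs.simps(3))
  let ?t = "(if nts s n = None then s\<lparr>nts := (nts s)(n := Some c)\<rparr> else s)"
  have i2: "inv ?t" by (rule inv_upd[OF it_cas.prems]) auto
  have g2: "good ?t n" by (rule good_same[OF g]) auto
  show ?case
    by (intro inv_setpc[OF i2]) (use g2 kont_addrs[of n k] in \<open>auto simp: kont_not_cas\<close>)
next
  case (rs_next s p t n m)
  have g: "good s n" using rs_next unfolding inv_def by (metis insertI1 pc_addrs.simps(5))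
  have "good s m" using good_next[OF g rs_next.hyps(2)] .
  then show ?case by (intro inv_setpc[OF rs_next.prems]) auto
next
  case (vc_alloc s p h nv m)
  let ?s' = "setpc p (VC_cas h m)
        (s\<lparr>used := insert m (used s), alloc := insert m (alloc s),
           nval := (nval s)(m := nv), nnext := (nnext s)(m := Some h),
           nts := (nts s)(m := None)\<rparr>)"
  have tr: "good s x \<Longrightarrow> good ?s' x" for x
    by (rule good_transfer) (auto simp: setpc_def vc_alloc.hyps(2))
  have hg: "good s h" using vc_alloc unfolding inv_def by (metis insertI1 pc_addrs.simps(9))
  have mg: "good ?s' m"
    unfolding good_def
  proof (intro allI impI)
    fix y assume "(RR ?s')\<^sup>*\<^sup>* m y"
    then show "y \<in> used ?s'"
    proof (cases rule: converse_rtranclpE)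
      case base then show ?thesis by (simp add: setpc_def)
    next
      case (step z)
      then have "z = h" by (simp add: RR_def setpc_def)
      then show ?thesis using step tr[OF hg] unfolding good_def by blast
    qed
  qed
  have old: "pcs s q = VC_cas h' m' \<Longrightarrow> m' \<noteq> m" for q h' m'
    using vc_alloc unfolding inv_def by (metis good_used insertCI pc_addrs.simps(10))
  show ?case using vc_alloc.prems tr mg tr[OF hg] old
    unfolding inv_def by (auto simp: setpc_def)
next
  case (vc_cas s p h m)
  show ?case
  proof (cases "vhead s = h")
    case True
    have "m \<in> pc_addrs (pcs s p)" using vc_cas.hyps by simp
    then have "good s m" using vc_cas.prems unfolding inv_def by blast
    then show ?thesis using vc_cas True unfolding inv_def good_def RR_def
      by (auto simp: setpc_def)
  next
    case False
    have "m \<in> pc_addrs (pcs s p)" using vc_cas.hyps by simp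
    then have "good s m" using vc_cas.prems unfolding inv_def by blast
    then show ?thesis using vc_cas False unfolding inv_def good_def RR_def
      by (auto simp: setpc_def)
  qed
next
  case (vc_del s p m)
  have "inv (s\<lparr>alloc := alloc s - {m}\<rparr>)" by (rule inv_upd[OF vc_del.prems]) auto
  then show ?case by (rule inv_setpc) auto
next
  case (ts_cas s p t)
  have "inv (if tstamp s = t then s\<lparr>tstamp := t + 1\<rparr> else s)"
    by (rule inv_upd[OF ts_cas.prems]) auto
  then show ?case by (rule inv_setpc) auto
next
  case (it_readc s p n k)
  then show ?case using inv_pc[of s n p] by (intro inv_setpc) auto
next
  case (rs_loop s p t n)
  then show ?case using inv_pc[of s n p] by (intro inv_setpc) auto
next
  case (vc_check s p h ov nv)
  then show ?case using inv_pc[of s h p] by (intro inv_setpc) auto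
qed (rule inv_setpc, assumption, simp add: inv_def, simp)+

lemma inv_steps: "step\<^sup>*\<^sup>* s s' \<Longrightarrow> inv s \<Longrightarrow> inv s'"
  by (induction rule: rtranclp_induct) (auto simp: step_def intro: inv_pstep)

lemma inv_init: "init_state s \<Longrightarrow> inv s"
proof -
  assume a: "init_state s"
  have "good s (vhead s)"
    unfolding good_def
  proof (intro allI impI)
    fix y assume "(RR s)\<^sup>*\<^sup>* (vhead s) y"
    then show "y \<in> used s"
    proof (cases rule: converse_rtranclpE)
      case base then show ?thesis using a unfolding init_state_def by blast
    next
      case (step z) then show ?thesis using a unfolding init_state_def RR_def by simp
    qed
  qed
  moreover have "pc_addrs (pcs s p) = {}" for p
    using a unfolding init_state_def by (metis pc_addrs.simps(12,13,14))
  moreover have "pcs s p \<noteq> VC_cas h m" for p h m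
  proof -
    have "pcs s p = Idle \<or> pcs s p = TS_read \<or> (\<exists>t. pcs s p = TS_cas t)"
      using a unfolding init_state_def by blast
    then show ?thesis by auto
  qed
  ultimately show ?thesis unfolding inv_def by auto
qed

lemma vlist_same: "in_vlist s a \<Longrightarrow> vhead s' = vhead s \<Longrightarrow> nnext s' = nnext s \<Longrightarrow> in_vlist s' a"
  unfolding in_vlist_def by simp

lemma vlist_pstep: "pstep p s s' \<Longrightarrow> inv s \<Longrightarrow> in_vlist s a \<Longrightarrow> in_vlist s' a"
proof (induction rule: pstep.induct)
  case (vc_alloc s p h nv m)
  let ?s' = "setpc p (VC_cas h m)
        (s\<lparr>used := insert m (used s), alloc := insert m (alloc s),
           nval := (nval s)(m := nv), nnext := (nnext s)(m := Some h),
           nts := (nts s)(m := None)\<rparr>)"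
  have g: "good s (vhead s)" using vc_alloc.prems unfolding inv_def by blast
  have e: "\<forall>y\<in>used s. nnext ?s' y = nnext s y" using vc_alloc.hyps(2) by (auto simp: setpc_def)
  have "(RR s)\<^sup>*\<^sup>* (vhead s) a" using vc_alloc.prems(2) unfolding in_vlist_def RR_def[abs_def] .
  then have "(RR ?s')\<^sup>*\<^sup>* (vhead s) a" using reach_transfer[OF g e] by blast
  moreover have "vhead ?s' = vhead s" by (simp add: setpc_def)
  ultimately show ?case unfolding in_vlist_def RR_def[abs_def] by simp
next
  case (vc_cas s p h m)
  show ?case
  proof (cases "vhead s = h")
    case True
    have "m \<in> pc_addrs (pcs s p)" using vc_cas.hyps by simp
    have n: "nnext s m = Some h" using vc_cas unfolding inv_def by blast
    have "(\<lambda>x y. nnext s x = Some y)\<^sup>*\<^sup>* h a" using vc_cas.prems(2) True unfolding in_vlist_def by simp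
    then have "(\<lambda>x y. nnext s x = Some y)\<^sup>*\<^sup>* m a" using n by (rule converse_rtranclp_into_rtranclp[rotated])
    then show ?thesis using True unfolding in_vlist_def by (simp add: setpc_def)
  next
    case False
    then show ?thesis using vc_cas.prems(2) unfolding in_vlist_def by (simp add: setpc_def)
  qed
qed (erule vlist_same; simp add: setpc_def)+

lemma vlist_steps: "step\<^sup>*\<^sup>* s s' \<Longrightarrow> inv s \<Longrightarrow> in_vlist s a \<Longrightarrow> in_vlist s' a"
proof (induction rule: rtranclp_induct)
  case base then show ?case by blast
next
  case (step y z)
  have iy: "inv y" by (rule inv_steps[OF step.hyps(1) step.prems(1)])
  have vy: "in_vlist y a" by (rule step.IH[OF step.prems])
  obtain p where "pstep p y z" using step.hyps(2) unfolding step_def by blast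
  then show ?case by (rule vlist_pstep[OF _ iy vy])
qed

theorem lemmaA1:
  fixes s0 s s' :: "('p, 'v) st" and a :: addr
  assumes "init_state s0"
    and "step\<^sup>*\<^sup>* s0 s"
    and "step\<^sup>*\<^sup>* s s'"
    and "in_vlist s a"
  shows "in_vlist s' a"
  using vlist_steps[OF assms(3) inv_steps[OF assms(2) inv_init[OF assms(1)]] assms(4)] .

end
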